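(* Let $\lambda\ge\Delta^{-1/2}$. For every $y=(s,r,s')$ with $s,s'\in\mathcal S$ and $r\in[0,1]$, and all $(p,g),(q,g')\in\mathcal Z$, \[ d_\lambda\bigl((H_g(p,y),r),(H_{g'}(q,y),r)\bigr)\le d_\lambda\bigl((p,g),(q,g')\bigr). \]
   Context: $\mathcal S=\{1,\dots,m\}$ finite. $\Theta=\{\theta_1<\dots<\theta_d\}$ with constant stride $\Delta>0$; $\Delta_d$ the probability simplex of $\mathbb R^d$; $\Delta_d^{\mathcal S}$ families $(p_i)_{i\in\mathcal S}$ with $p_i\in\Delta_d$; $\mathcal Z:=\Delta_d^{\mathcal S}\times[0,1]$. For $u\in\Delta_d$, $\eta^{u,0}:=\sum_ku_k\delta_{\theta_k}$. Categorical projection $\Pi^\Theta_{\mathrm C}$: $\delta_x\mapsto\delta_{\theta_1}$ if $x\le\theta_1$, $\delta_{\theta_d}$ if $x\ge\theta_d$, $\frac{\theta_{k+1}-x}{\Delta}\delta_{\theta_k}+\frac{x-\theta_k}{\Delta}\delta_{\theta_{k+1}}$ if $\theta_k\le x\le\theta_{k+1}$, extended linearly to laws. For $b\in\mathbb R$, $L_bu\in\Delta_d$ is defined by $\Pi^\Theta_{\mathrm C}(\text{law of }X+b,\ X\sim\eta^{u,0})=\eta^{L_bu,0}$. For $g\in\mathbb R$, $H_g(p,(s,r,s'))=q$ with $q_u=p_u$ for $u\ne s$ and $q_s=L_{r-g}p_{s'}$. Coordinate Cramér metric: $F_u(\theta_k):=\sum_{j\le k}u_j$, $\ell^\Theta_{\mathrm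 C}(u,v)^2:=\Delta\sum_{k=1}^{d-1}(F_u(\theta_k)-F_v(\theta_k))^2$, $\ell^\Theta_{\mathrm C,\infty}(p,q):=\max_i\ell^\Theta_{\mathrm C}(p_i,q_i)$. Product metric $d_\lambda((p,g),(q,g')):=\ell^\Theta_{\mathrm C,\infty}(p,q)+\lambda|g-g'|$. *)

theory Defs
  imports Complex_Main
begin

text \<open>Support grid: atoms theta_k = th1 + (k-1)*Dl, k = 1..d.
  Probability vectors are functions nat => real supported on {1..d}.
  States are {1..m}; a family p is a function nat => (nat => real).\<close>

definition atom :: "real \<Rightarrow> real \<Rightarrow> nat \<Rightarrow> real" where
  "atom th1 Dl k = th1 + real (k - 1) * Dl"

definition simplex :: "nat \<Rightarrow> (nat \<Rightarrow> real) set" where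
  "simplex d = {u. (\<forall>k\<in>{1..d}. 0 \<le> u k) \<and> (\<forall>k. k \<notin> {1..d} \<longrightarrow> u k = 0)
                   \<and> (\<Sum>k=1..d. u k) = 1}"

definition fam_simplex :: "nat \<Rightarrow> nat \<Rightarrow> (nat \<Rightarrow> nat \<Rightarrow> real) set" where
  "fam_simplex m d = {p. \<forall>i\<in>{1..m}. p i \<in> simplex d}"

text \<open>Categorical projection of the Dirac mass at x: weight given to atom theta_k.\<close>
definition cat_proj_dirac :: "real \<Rightarrow> real \<Rightarrow> nat \<Rightarrow> real \<Rightarrow> nat \<Rightarrow> real" where
  "cat_proj_dirac th1 Dl d x k =
     (if k \<notin> {1..d} then 0
      else if x \<le> atom th1 Dl 1 then (if k = 1 then 1 else 0)
      else if x \<ge> atom th1 Dl d then (if k = d then 1 else 0)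
      else if 2 \<le> k \<and> atom th1 Dl (k - 1) \<le> x \<and> x \<le> atom th1 Dl k
        then (x - atom th1 Dl (k - 1)) / Dl
      else if k + 1 \<le> d \<and> atom th1 Dl k \<le> x \<and> x \<le> atom th1 Dl (k + 1)
        then (atom th1 Dl (k + 1) - x) / Dl
      else 0)"

text \<open>L_b u: projection (extended linearly) of the law of X + b, X ~ sum_k u_k delta_{theta_k}.\<close>
definition Lshift :: "real \<Rightarrow> real \<Rightarrow> nat \<Rightarrow> real \<Rightarrow> (nat \<Rightarrow> real) \<Rightarrow> (nat \<Rightarrow> real)" where
  "Lshift th1 Dl d b u = (\<lambda>k. \<Sum>j=1..d. u j * cat_proj_dirac th1 Dl d (atom th1 Dl j + b) k)"

definition Hop :: "real \<Rightarrow> real \<Rightarrow> nat \<Rightarrow> real \<Rightarrow> (nat \<Rightarrow> nat \<Rightarrow> real) \<Rightarrow> nat \<times> real \<times> nat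
                    \<Rightarrow> (nat \<Rightarrow> nat \<Rightarrow> real)" where
  "Hop th1 Dl d g p y = (case y of (s, r, s') \<Rightarrow> p(s := Lshift th1 Dl d (r - g) (p s')))"

definition cdf :: "(nat \<Rightarrow> real) \<Rightarrow> nat \<Rightarrow> real" where
  "cdf u k = (\<Sum>j=1..k. u j)"

definition cramer :: "real \<Rightarrow> nat \<Rightarrow> (nat \<Rightarrow> real) \<Rightarrow> (nat \<Rightarrow> real) \<Rightarrow> real" where
  "cramer Dl d u v = sqrt (Dl * (\<Sum>k=1..d-1. (cdf u k - cdf v k)^2))"

definition cramer_inf :: "real \<Rightarrow> nat \<Rightarrow> nat \<Rightarrow> (nat \<Rightarrow> nat \<Rightarrow> real) \<Rightarrow> (nat \<Rightarrow> nat \<Rightarrow> real) \<Rightarrow> real" where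
  "cramer_inf Dl d m p q = Max ((\<lambda>i. cramer Dl d (p i) (q i)) ` {1..m})"

definition d_lam :: "real \<Rightarrow> real \<Rightarrow> nat \<Rightarrow> nat \<Rightarrow> (nat \<Rightarrow> nat \<Rightarrow> real) \<times> real
                      \<Rightarrow> (nat \<Rightarrow> nat \<Rightarrow> real) \<times> real \<Rightarrow> real" where
  "d_lam lam Dl d m pg qg' = cramer_inf Dl d m (fst pg) (fst qg') + lam * \<bar>snd pg - snd qg'\<bar>"

end

theory Submission
  imports Defs "HOL-Analysis.Analysis"
begin

definition clamp :: "real \<Rightarrow> real" where "clamp z = max 0 (min 1 z)"

lemma atom_eq: "k \<ge> 1 \<Longrightarrow> atom th1 Dl k = th1 + (real k - 1) * Dl"
  unfolding atom_def by (simp add: of_nat_diff)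

lemma G1:
  assumes "Dl > 0" "2 \<le> d"
  shows "cat_proj_dirac th1 Dl d x 1 = clamp ((atom th1 Dl 2 - x) / Dl)"
proof -
  have a1: "atom th1 Dl 1 = th1" by (simp add: atom_def)
  have a2: "atom th1 Dl 2 = th1 + Dl" by (simp add: atom_def)
  have ad: "atom th1 Dl d \<ge> th1 + Dl" using assms atom_eq[of d th1 Dl]
    by (simp add: mult_right_mono)
  have cpd: "cat_proj_dirac th1 Dl d x 1 = (if x \<le> th1 then 1 else if x \<ge> atom th1 Dl d then 0
     else if x \<le> th1 + Dl then (th1 + Dl - x) / Dl else 0)"
    unfolding cat_proj_dirac_def using assms by (auto simp: atom_def)
  show ?thesis
    unfolding cpd clamp_def a2
    using assms ad by (auto simp: field_simps)
qed

lemma Gstep: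
  assumes "Dl > 0" "2 \<le> k" "k + 1 \<le> d"
  shows "cat_proj_dirac th1 Dl d x k = clamp ((atom th1 Dl (k+1) - x) / Dl) - clamp ((atom th1 Dl k - x) / Dl)"
proof -
  define z where "z = (atom th1 Dl k - x) / Dl"
  define ak where "ak = atom th1 Dl k"
  have ak1: "atom th1 Dl (k+1) = ak + Dl" using assms by (simp add: ak_def atom_eq algebra_simps)
  have akm: "atom th1 Dl (k-1) = ak - Dl" using assms by (simp add: ak_def atom_eq algebra_simps of_nat_diff)
  have a1: "atom th1 Dl 1 \<le> ak - Dl"
  proof -
    have "(1::real) \<le> real k - 1" using assms by linarith
    then have "Dl \<le> (real k - 1) * Dl" using assms by simp
    then show ?thesis using assms by (simp add: ak_def atom_eq atom_def)
  qed
  have ad: "atom th1 Dl d \<ge> ak + Dl"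
  proof -
    have "real k \<le> real d - 1" using assms by linarith
    then have "real k * Dl \<le> (real d - 1) * Dl" using assms by (simp add: mult_right_mono)
    then show ?thesis using assms by (simp add: ak_def atom_eq algebra_simps)
  qed
  have e1: "(atom th1 Dl (k+1) - x) / Dl = z + 1" unfolding z_def ak1 ak_def[symmetric] using assms by (simp add: field_simps)
  have cpd: "cat_proj_dirac th1 Dl d x k = (if x \<le> atom th1 Dl 1 then 0 else if x \<ge> atom th1 Dl d then 0
     else if ak - Dl \<le> x \<and> x \<le> ak then (x - (ak - Dl)) / Dl
     else if ak \<le> x \<and> x \<le> ak + Dl then (ak + Dl - x) / Dl else 0)"
    unfolding cat_proj_dirac_def akm ak1 ak_def[symmetric] using assms by auto
  have zd: "z = (ak - x) / Dl" unfolding z_def ak_def ..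
  show ?thesis
  proof (cases "x \<le> atom th1 Dl 1")
    case True
    have "z \<ge> 1" unfolding zd using True a1 assms by (simp add: field_simps)
    then show ?thesis using True unfolding cpd e1 clamp_def z_def[symmetric] by simp
  next
    case c1: False
    show ?thesis
    proof (cases "x \<ge> atom th1 Dl d")
      case True
      have "z \<le> -1" unfolding zd using True ad assms by (simp add: field_simps)
      then show ?thesis using True c1 unfolding cpd e1 clamp_def z_def[symmetric] by simp
    next
      case c2: False
      show ?thesis
      proof (cases "ak - Dl \<le> x \<and> x \<le> ak")
        case True
        have "0 \<le> z" "z \<le> 1" unfolding zd using True assms by (auto simp: field_simps)
        moreover have "(x - (ak - Dl)) / Dl = 1 - z" unfolding zd using assms by (simp add: field_simps)
        ultimately show ?thesis using True c1 c2 unfolding cpd e1 clamp_def z_def[symmetric] by simp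
      next
        case c3: False
        show ?thesis
        proof (cases "ak \<le> x \<and> x \<le> ak + Dl")
          case True
          have "-1 \<le> z" "z \<le> 0" unfolding zd using True assms by (auto simp: field_simps)
          moreover have "(ak + Dl - x) / Dl = z + 1" unfolding zd using assms by (simp add: field_simps)
          ultimately show ?thesis using True c1 c2 c3 unfolding cpd e1 clamp_def z_def[symmetric] by simp
        next
          case c4: False
          have "z > 1 \<or> z < -1" unfolding zd using c3 c4 assms by (auto simp: field_simps)
          then show ?thesis using c1 c2 c3 c4 unfolding cpd e1 clamp_def z_def[symmetric] by auto
        qed
      qed
    qed
  qed
qed

lemma Gcdf:
  assumes "Dl > 0" "1 \<le> k" "k + 1 \<le> d"
  shows "(\<Sum>i=1..k. cat_proj_dirac th1 Dl d x i) = clamp ((atom th1 Dl (k+1) - x) / Dl)"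
  using assms
proof (induction k)
  case 0 then show ?case by simp
next
  case (Suc k)
  show ?case
  proof (cases "k = 0")
    case True then show ?thesis using G1[of Dl d th1 x] Suc.prems by (simp add: numeral_2_eq_2)
  next
    case False
    have "(\<Sum>i=1..Suc k. cat_proj_dirac th1 Dl d x i) = (\<Sum>i=1..k. cat_proj_dirac th1 Dl d x i) + cat_proj_dirac th1 Dl d x (Suc k)"
      by simp
    also have "\<dots> = clamp ((atom th1 Dl (k+1) - x) / Dl) + cat_proj_dirac th1 Dl d x (Suc k)"
      using Suc False by simp
    also have "\<dots> = clamp ((atom th1 Dl (Suc k+1) - x) / Dl)"
      using Gstep[of Dl "Suc k" d th1 x] Suc.prems False by simp
    finally show ?thesis .
  qed
qed


definition Tf :: "real \<Rightarrow> nat \<Rightarrow> nat \<Rightarrow> real" where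
  "Tf \<beta> k j = clamp (real k + 1 - real j - \<beta>)"

lemma clamp_mono: "a \<le> b \<Longrightarrow> clamp a \<le> clamp b"
  unfolding clamp_def by simp

lemma clamp_bounds: "0 \<le> clamp a" "clamp a \<le> 1"
  unfolding clamp_def by auto

lemma clamp_lip: "\<bar>clamp a - clamp b\<bar> \<le> \<bar>a - b\<bar>"
  unfolding clamp_def by (simp add: abs_if max_def min_def)

lemma cdfL:
  assumes "Dl > 0" "1 \<le> k" "k + 1 \<le> d"
  shows "cdf (Lshift th1 Dl d b u) k = (\<Sum>j=1..d. u j * Tf (b / Dl) k j)"
proof -
  have "cdf (Lshift th1 Dl d b u) k = (\<Sum>i=1..k. \<Sum>j=1..d. u j * cat_proj_dirac th1 Dl d (atom th1 Dl j + b) i)"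
    unfolding cdf_def Lshift_def ..
  also have "\<dots> = (\<Sum>j=1..d. u j * (\<Sum>i=1..k. cat_proj_dirac th1 Dl d (atom th1 Dl j + b) i))"
    by (subst sum.swap) (simp add: sum_distrib_left)
  also have "\<dots> = (\<Sum>j=1..d. u j * Tf (b / Dl) k j)"
  proof (rule sum.cong[OF refl])
    fix j assume j: "j \<in> {1..d}"
    have "(atom th1 Dl (k+1) - (atom th1 Dl j + b)) / Dl = real k + 1 - real j - b / Dl"
      using j assms by (simp add: atom_eq field_simps)
    then show "u j * (\<Sum>i=1..k. cat_proj_dirac th1 Dl d (atom th1 Dl j + b) i) = u j * Tf (b / Dl) k j"
      using Gcdf[OF assms] unfolding Tf_def by simp
  qed
  finally show ?thesis .
qed

lemma sum_by_parts:
  fixes e t :: "nat \<Rightarrow> real"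
  shows "(\<Sum>j=1..n. e j * t j) = (\<Sum>i=1..n. e i) * t n + (\<Sum>j=1..n-1. (\<Sum>i=1..j. e i) * (t j - t (j+1)))"
proof (induction n)
  case 0 then show ?case by simp
next
  case (Suc n)
  show ?case
  proof (cases "n = 0")
    case True then show ?thesis by simp
  next
    case False
    then obtain m where m: "n = Suc m" by (cases n) auto
    have "(\<Sum>j=1..Suc n - 1. (\<Sum>i=1..j. e i) * (t j - t (j+1)))
        = (\<Sum>j=1..n-1. (\<Sum>i=1..j. e i) * (t j - t (j+1))) + (\<Sum>i=1..n. e i) * (t n - t (n+1))"
      unfolding m by simp
    then show ?thesis using Suc.IH by (simp add: algebra_simps)
  qed
qed

lemma wcs:
  fixes w a :: "nat \<Rightarrow> real"
  assumes "\<And>j. j \<in> A \<Longrightarrow> w j \<ge> 0"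
  shows "(\<Sum>j\<in>A. w j * a j)^2 \<le> (\<Sum>j\<in>A. w j) * (\<Sum>j\<in>A. w j * (a j)^2)"
proof -
  have "(\<Sum>j\<in>A. sqrt (w j) * (sqrt (w j) * a j))^2 \<le> (\<Sum>j\<in>A. (sqrt (w j))^2) * (\<Sum>j\<in>A. (sqrt (w j) * a j)^2)"
    by (rule Cauchy_Schwarz_ineq_sum)
  moreover have "(\<Sum>j\<in>A. sqrt (w j) * (sqrt (w j) * a j)) = (\<Sum>j\<in>A. w j * a j)"
    by (rule sum.cong) (use assms in \<open>auto simp: mult.assoc[symmetric]\<close>)
  moreover have "(\<Sum>j\<in>A. (sqrt (w j))^2) = (\<Sum>j\<in>A. w j)"
    by (rule sum.cong) (use assms in auto)
  moreover have "(\<Sum>j\<in>A. (sqrt (w j) * a j)^2) = (\<Sum>j\<in>A. w j * (a j)^2)"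
    by (rule sum.cong) (use assms in \<open>auto simp: power_mult_distrib\<close>)
  ultimately show ?thesis by simp
qed


lemma tel1: "(\<Sum>j=1..n. (f j - f (Suc j))::real) = f 1 - f (Suc n)"
  by (induction n) auto

lemma tel2: "(\<Sum>j=1..n. (f (Suc j) - f j)::real) = f (Suc n) - f 1"
  by (induction n) auto

lemma clamp_relu: "clamp z = max 0 z - max 0 (z - 1)"
  unfolding clamp_def by (simp add: max_def min_def)

lemma sum_clamp: "(\<Sum>k=1..n. clamp (real k + c)) = max 0 (real n + c) - max 0 c"
proof (induction n)
  case 0 then show ?case by simp
next
  case (Suc n)
  have "clamp (real (Suc n) + c) = max 0 (real (Suc n) + c) - max 0 (real n + c)"
    unfolding clamp_relu by simp
  then show ?case using Suc by simp
qed

lemma nonexp: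
  assumes "Dl > 0" "d \<ge> 1" "u \<in> Defs.simplex d" "v \<in> Defs.simplex d"
  shows "(\<Sum>k=1..d-1. (cdf (Lshift th1 Dl d b u) k - cdf (Lshift th1 Dl d b v) k)^2)
       \<le> (\<Sum>k=1..d-1. (cdf u k - cdf v k)^2)"
proof -
  define \<beta> where "\<beta> = b / Dl"
  define E where "E j = cdf u j - cdf v j" for j
  define W where "W k j = Tf \<beta> k j - Tf \<beta> k (j+1)" for k j
  have su: "(\<Sum>i=1..d. u i) = 1" and sv: "(\<Sum>i=1..d. v i) = 1" using assms by (auto simp: Defs.simplex_def)
  have Dk: "cdf (Lshift th1 Dl d b u) k - cdf (Lshift th1 Dl d b v) k = (\<Sum>j=1..d-1. W k j * E j)"
    if k: "k \<in> {1..d-1}" for k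
  proof -
    have "cdf (Lshift th1 Dl d b u) k - cdf (Lshift th1 Dl d b v) k = (\<Sum>j=1..d. (u j - v j) * Tf \<beta> k j)"
    proof -
      have k1: "1 \<le> k" "k + 1 \<le> d" using k assms by auto
      show ?thesis unfolding \<beta>_def cdfL[OF assms(1) k1] by (simp add: sum_subtractf left_diff_distrib)
    qed
    also have "\<dots> = (\<Sum>i=1..d. u i - v i) * Tf \<beta> k d + (\<Sum>j=1..d-1. (\<Sum>i=1..j. u i - v i) * (Tf \<beta> k j - Tf \<beta> k (j+1)))"
      by (rule sum_by_parts)
    also have "\<dots> = (\<Sum>j=1..d-1. W k j * E j)"
      using su sv unfolding W_def E_def cdf_def by (simp add: sum_subtractf mult.commute)
    finally show ?thesis .
  qed
  have Wnn: "W k j \<ge> 0" for k j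
    unfolding W_def Tf_def by (simp add: clamp_mono)
  have row: "(\<Sum>j=1..d-1. W k j) \<le> 1" for k
  proof -
    have "(\<Sum>j=1..d-1. W k j) = Tf \<beta> k 1 - Tf \<beta> k (Suc (d-1))"
      unfolding W_def using tel1[of "Tf \<beta> k" "d-1"] by simp
    then show ?thesis unfolding Tf_def using clamp_bounds by (smt (verit))
  qed
  have col: "(\<Sum>k=1..d-1. W k j) \<le> 1" for j
  proof -
    define F where "F k = clamp (real k - real j - \<beta>)" for k
    have "W k j = F (Suc k) - F k" for k unfolding W_def F_def Tf_def by (simp add: algebra_simps)
    then have "(\<Sum>k=1..d-1. W k j) = F (Suc (d-1)) - F 1"
      using tel2[of F "d-1"] by simp
    then show ?thesis unfolding F_def using clamp_bounds by (smt (verit))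
  qed
  have "(\<Sum>k=1..d-1. (cdf (Lshift th1 Dl d b u) k - cdf (Lshift th1 Dl d b v) k)^2)
      = (\<Sum>k=1..d-1. (\<Sum>j=1..d-1. W k j * E j)^2)"
    by (rule sum.cong) (auto simp: Dk)
  also have "\<dots> \<le> (\<Sum>k=1..d-1. (\<Sum>j=1..d-1. W k j) * (\<Sum>j=1..d-1. W k j * (E j)^2))"
    by (rule sum_mono) (rule wcs, rule Wnn)
  also have "\<dots> \<le> (\<Sum>k=1..d-1. (\<Sum>j=1..d-1. W k j * (E j)^2))"
  proof (rule sum_mono)
    fix k
    have "0 \<le> (\<Sum>j=1..d-1. W k j * (E j)^2)" by (intro sum_nonneg mult_nonneg_nonneg Wnn) simp
    then show "(\<Sum>j=1..d-1. W k j) * (\<Sum>j=1..d-1. W k j * (E j)^2) \<le> (\<Sum>j=1..d-1. W k j * (E j)^2)"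
      using row[of k] by (simp add: mult_left_le_one_le sum_nonneg Wnn)
  qed
  also have "\<dots> = (\<Sum>j=1..d-1. (E j)^2 * (\<Sum>k=1..d-1. W k j))"
    by (subst sum.swap) (simp add: sum_distrib_left mult.commute)
  also have "\<dots> \<le> (\<Sum>j=1..d-1. (E j)^2)"
    by (rule sum_mono) (rule mult_left_le[OF col], simp)
  finally show ?thesis unfolding E_def .
qed

lemma shiftlem:
  assumes "Dl > 0" "d \<ge> 1" "v \<in> Defs.simplex d" "b \<le> b'"
  shows "(\<Sum>k=1..d-1. (cdf (Lshift th1 Dl d b v) k - cdf (Lshift th1 Dl d b' v) k)^2) \<le> ((b' - b) / Dl)^2"
proof -
  define \<beta> where "\<beta> = b / Dl"
  define \<beta>' where "\<beta>' = b' / Dl"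
  have bb: "\<beta> \<le> \<beta>'" unfolding \<beta>_def \<beta>'_def using assms by (simp add: divide_right_mono)
  have dd: "\<beta>' - \<beta> = (b' - b) / Dl" unfolding \<beta>_def \<beta>'_def by (simp add: diff_divide_distrib)
  have vnn: "\<And>j. j \<in> {1..d} \<Longrightarrow> v j \<ge> 0" and sv: "(\<Sum>i=1..d. v i) = 1" using assms by (auto simp: Defs.simplex_def)
  define D where "D k = (\<Sum>j=1..d. v j * (Tf \<beta> k j - Tf \<beta>' k j))" for k
  have Dk: "cdf (Lshift th1 Dl d b v) k - cdf (Lshift th1 Dl d b' v) k = D k"
    if k: "k \<in> {1..d-1}" for k
  proof -
    have k1: "1 \<le> k" "k + 1 \<le> d" using k assms by auto
    show ?thesis unfolding \<beta>_def \<beta>'_def D_def cdfL[OF assms(1) k1] by (simp add: sum_subtractf right_diff_distrib)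
  qed
  have tdiff: "0 \<le> Tf \<beta> k j - Tf \<beta>' k j \<and> Tf \<beta> k j - Tf \<beta>' k j \<le> \<beta>' - \<beta>" for k j
  proof -
    have "Tf \<beta>' k j \<le> Tf \<beta> k j" unfolding Tf_def using bb by (simp add: clamp_mono)
    moreover have "\<bar>Tf \<beta> k j - Tf \<beta>' k j\<bar> \<le> \<bar>\<beta>' - \<beta>\<bar>" unfolding Tf_def
      using clamp_lip[of "real k + 1 - real j - \<beta>" "real k + 1 - real j - \<beta>'"] by simp
    ultimately show ?thesis using bb by simp
  qed
  have Dnn: "0 \<le> D k" for k unfolding D_def
    by (intro sum_nonneg mult_nonneg_nonneg) (use vnn tdiff in auto)
  have Dle: "D k \<le> \<beta>' - \<beta>" for k
  proof -
    have "D k \<le> (\<Sum>j=1..d. v j * (\<beta>' - \<beta>))" unfolding D_def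
      by (rule sum_mono) (use vnn tdiff in \<open>auto intro: mult_left_mono\<close>)
    also have "\<dots> = \<beta>' - \<beta>" using sv by (simp add: sum_distrib_right[symmetric])
    finally show ?thesis .
  qed
  have colsum: "(\<Sum>k=1..d-1. (Tf \<beta> k j - Tf \<beta>' k j)) \<le> \<beta>' - \<beta>" for j
  proof -
    have e: "Tf g k j = clamp (real k + (1 - real j - g))" for g k unfolding Tf_def by (simp add: algebra_simps)
    define X where "X = real (d-1) + (1 - real j)"
    define Y where "Y = 1 - real j"
    have h: "(\<Sum>k=1..d-1. Tf g k j) = max 0 (X - g) - max 0 (Y - g)" for g
    proof -
      have "(\<Sum>k=1..d-1. Tf g k j) = max 0 (real (d-1) + (1 - real j - g)) - max 0 (1 - real j - g)"
        unfolding e by (rule sum_clamp)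
      moreover have "real (d-1) + (1 - real j - g) = X - g" "1 - real j - g = Y - g" unfolding X_def Y_def by simp_all
      ultimately show ?thesis by simp
    qed
    have ml: "(max 0 (X - \<beta>) - max 0 (Y - \<beta>)) - (max 0 (X - \<beta>') - max 0 (Y - \<beta>')) \<le> \<beta>' - \<beta>"
      using bb by (simp add: max_def)
    have "(\<Sum>k=1..d-1. (Tf \<beta> k j - Tf \<beta>' k j)) = (\<Sum>k=1..d-1. Tf \<beta> k j) - (\<Sum>k=1..d-1. Tf \<beta>' k j)"
      by (simp only: sum_subtractf)
    also have "\<dots> \<le> \<beta>' - \<beta>" unfolding h using ml .
    finally show ?thesis .
  qed
  have sumD: "(\<Sum>k=1..d-1. D k) \<le> \<beta>' - \<beta>"
  proof -
    have "(\<Sum>k=1..d-1. D k) = (\<Sum>j=1..d. v j * (\<Sum>k=1..d-1. (Tf \<beta> k j - Tf \<beta>' k j)))"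
      unfolding D_def by (subst sum.swap) (simp add: sum_distrib_left)
    also have "\<dots> \<le> (\<Sum>j=1..d. v j * (\<beta>' - \<beta>))"
      by (rule sum_mono) (use vnn colsum in \<open>auto intro: mult_left_mono\<close>)
    also have "\<dots> = \<beta>' - \<beta>" using sv by (simp add: sum_distrib_right[symmetric])
    finally show ?thesis .
  qed
  have "(\<Sum>k=1..d-1. (cdf (Lshift th1 Dl d b v) k - cdf (Lshift th1 Dl d b' v) k)^2) = (\<Sum>k=1..d-1. (D k)^2)"
    by (rule sum.cong) (auto simp: Dk)
  also have "\<dots> \<le> (\<Sum>k=1..d-1. D k * (\<beta>' - \<beta>))"
    by (rule sum_mono) (use Dnn Dle in \<open>auto simp: power2_eq_square intro: mult_left_mono\<close>)
  also have "\<dots> = (\<Sum>k=1..d-1. D k) * (\<beta>' - \<beta>)" by (simp add: sum_distrib_right)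
  also have "\<dots> \<le> (\<beta>' - \<beta>) * (\<beta>' - \<beta>)" using sumD bb by (simp add: mult_right_mono)
  finally show ?thesis using dd by (simp add: power2_eq_square)
qed


lemma cramer_alt: "Dl \<ge> 0 \<Longrightarrow> cramer Dl d u w = sqrt Dl * L2_set (\<lambda>k. cdf u k - cdf w k) {1..d-1}"
  unfolding cramer_def L2_set_def by (simp add: real_sqrt_mult)

lemma cramer_tri:
  assumes "Dl \<ge> 0"
  shows "cramer Dl d u w \<le> cramer Dl d u v + cramer Dl d v w"
proof -
  have "L2_set (\<lambda>k. cdf u k - cdf w k) {1..d-1} \<le> L2_set (\<lambda>k. cdf u k - cdf v k) {1..d-1} + L2_set (\<lambda>k. cdf v k - cdf w k) {1..d-1}"
    using L2_set_triangle_ineq[of "\<lambda>k. cdf u k - cdf v k" "\<lambda>k. cdf v k - cdf w k" "{1..d-1}"] by simp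
  then show ?thesis unfolding cramer_alt[OF assms] using assms
    by (simp add: distrib_left[symmetric] mult_left_mono)
qed

lemma cramer_ne:
  assumes "Dl > 0" "d \<ge> 1" "u \<in> Defs.simplex d" "v \<in> Defs.simplex d"
  shows "cramer Dl d (Lshift th1 Dl d b u) (Lshift th1 Dl d b v) \<le> cramer Dl d u v"
  unfolding cramer_def using nonexp[OF assms, of th1 b] assms
  by (intro real_sqrt_le_mono mult_left_mono) auto

lemma cramer_sh0:
  assumes "Dl > 0" "d \<ge> 1" "v \<in> Defs.simplex d" "b \<le> b'"
  shows "cramer Dl d (Lshift th1 Dl d b v) (Lshift th1 Dl d b' v) \<le> \<bar>b - b'\<bar> / sqrt Dl"
proof -
  have "cramer Dl d (Lshift th1 Dl d b v) (Lshift th1 Dl d b' v) \<le> sqrt (Dl * ((b' - b) / Dl)^2)"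
    unfolding cramer_def using shiftlem[OF assms, of th1] assms
    by (intro real_sqrt_le_mono mult_left_mono) auto
  also have "sqrt (Dl * ((b' - b) / Dl)^2) = \<bar>b - b'\<bar> / sqrt Dl"
  proof -
    have "Dl * ((b' - b) / Dl)^2 = (b - b')^2 / Dl" using assms by (simp add: power2_eq_square field_simps)
    then show ?thesis by (simp add: real_sqrt_divide)
  qed
  finally show ?thesis .
qed

lemma cramer_sh:
  assumes "Dl > 0" "d \<ge> 1" "v \<in> Defs.simplex d"
  shows "cramer Dl d (Lshift th1 Dl d b v) (Lshift th1 Dl d b' v) \<le> \<bar>b - b'\<bar> / sqrt Dl"
proof (cases "b \<le> b'")
  case True then show ?thesis using cramer_sh0[OF assms] by simp
next
  case False
  have sym: "cramer Dl d x y = cramer Dl d y x" for x y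
    unfolding cramer_def by (simp add: power2_commute)
  show ?thesis using cramer_sh0[OF assms, of b' b th1] False by (simp add: sym abs_minus_commute)
qed


theorem proposition7:
  fixes m d :: nat and th1 Dl lam g g' r :: real and s s' :: nat
    and p q :: "nat \<Rightarrow> nat \<Rightarrow> real"
  assumes "m \<ge> 1" and "d \<ge> 1" and "Dl > 0"
    and "lam \<ge> Dl powr (-1/2)"
    and "s \<in> {1..m}" and "s' \<in> {1..m}" and "r \<in> {0..1}"
    and "p \<in> fam_simplex m d" and "g \<in> {0..1}"
    and "q \<in> fam_simplex m d" and "g' \<in> {0..1}"
  shows "d_lam lam Dl d m (Hop th1 Dl d g p (s, r, s'), r) (Hop th1 Dl d g' q (s, r, s'), r)
           \<le> d_lam lam Dl d m (p, g) (q, g')"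
proof -
  have pw: "Dl powr (-1/2) = 1 / sqrt Dl"
  proof -
    have "(-1/2::real) = - (1/2)" by simp
    then show ?thesis using assms(3) by (simp add: powr_minus_divide powr_half_sqrt)
  qed
  have lam: "1 / sqrt Dl \<le> lam" using assms(4) pw by simp
  have lam0: "0 \<le> lam" using lam assms(3) by (smt (verit) divide_nonneg_nonneg real_sqrt_ge_zero)
  define C where "C = cramer_inf Dl d m p q"
  have fin: "finite ((\<lambda>i. cramer Dl d (p i) (q i)) ` {1..m})" by simp
  have Cge: "cramer Dl d (p i) (q i) \<le> C" if "i \<in> {1..m}" for i
    unfolding C_def cramer_inf_def using that by (intro Max_ge fin) auto
  have ps: "p s' \<in> Defs.simplex d" "q s' \<in> Defs.simplex d"
    using assms(6,8,10) by (auto simp: fam_simplex_def)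
  define P where "P = p(s := Lshift th1 Dl d (r - g) (p s'))"
  define Q where "Q = q(s := Lshift th1 Dl d (r - g') (q s'))"
  have key: "cramer Dl d (P i) (Q i) \<le> C + lam * \<bar>g - g'\<bar>" if i: "i \<in> {1..m}" for i
  proof (cases "i = s")
    case True
    have "cramer Dl d (P i) (Q i) \<le> cramer Dl d (Lshift th1 Dl d (r - g) (p s')) (Lshift th1 Dl d (r - g) (q s'))
        + cramer Dl d (Lshift th1 Dl d (r - g) (q s')) (Lshift th1 Dl d (r - g') (q s'))"
      unfolding P_def Q_def True using assms(3) by (simp add: cramer_tri)
    also have "\<dots> \<le> cramer Dl d (p s') (q s') + \<bar>(r - g) - (r - g')\<bar> / sqrt Dl"
      by (intro add_mono cramer_ne cramer_sh assms(2,3) ps)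
    also have "\<dots> \<le> C + lam * \<bar>g - g'\<bar>"
    proof (intro add_mono)
      show "cramer Dl d (p s') (q s') \<le> C" using Cge assms(6) by blast
      have "\<bar>(r - g) - (r - g')\<bar> / sqrt Dl = (1 / sqrt Dl) * \<bar>g - g'\<bar>"
        by (simp add: abs_minus_commute)
      also have "\<dots> \<le> lam * \<bar>g - g'\<bar>" using lam by (intro mult_right_mono) auto
      finally show "\<bar>(r - g) - (r - g')\<bar> / sqrt Dl \<le> lam * \<bar>g - g'\<bar>" .
    qed
    finally show ?thesis .
  next
    case False
    then have "cramer Dl d (P i) (Q i) = cramer Dl d (p i) (q i)" unfolding P_def Q_def by simp
    also have "\<dots> \<le> C" using Cge i by blast
    also have "\<dots> \<le> C + lam * \<bar>g - g'\<bar>" using lam0 by simp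
    finally show ?thesis .
  qed
  have "cramer_inf Dl d m P Q \<le> C + lam * \<bar>g - g'\<bar>"
    unfolding cramer_inf_def using assms(1) key by (subst Max_le_iff) auto
  then show ?thesis
    unfolding d_lam_def Hop_def C_def by (simp add: P_def Q_def)
qed

end
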